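(* Let $\mathsf x\in\mathbb R^m$ be an $s$-rectifiable random vector and $n\in\mathbb N$ with $s<n\le m$. Then there exists a Borel measurable mapping $g\colon\mathbb R^{n\times m}\times\mathbb R^n\to\mathbb R^m$ such that $\mathbb P[g(\mathbf A,\mathbf A\mathsf x)\neq\mathsf x]=0$ for $\lambda^{n\times m}$-almost all $\mathbf A\in\mathbb R^{n\times m}$.
   Context: For $s\in\mathbb N$, a nonempty set $\mathcal U\subseteq\mathbb R^m$ is $s$-rectifiable if $\mathcal U=\varphi(\mathcal A)$ for some compact $\mathcal A\subseteq\mathbb R^s$ and Lipschitz $\varphi\colon\mathcal A\to\mathbb R^m$; countably $s$-rectifiable if it is a countable union of $s$-rectifiable sets; countably $(\mathscr H^s,s)$-rectifiable if it is $\mathscr H^s$-measurable and there is a countably $s$-rectifiable $\mathcal V$ with $\mathscr H^s(\mathcal U\setminus\mathcal V)=0$, where $\mathscr H^s$ is $s$-dimensional Hausdorff measure on $\mathbb R^m$. For a set $\mathcal U$, $\mathscr H^s|_{\mathcal U}(\mathcal B)=\mathscr H^s(\mathcal B\cap\mathcal U)$. A random vector $\mathsf x\in\mathbb R^m$ with distribution $\mu_{\mathsf x}$ is $s$-rectifiable if there is a countably $(\mathscr H^s,s)$-rectifiable set $\mathcal U$ with $\mu_{\mathsf x}\ll\mathscr H^s|_{\mathcal U}$. $\lambda^{n\times m}$ is Lebesgue measure on $\mathbb R^{n\times m}$. *)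

theory Defs
  imports "HOL-Probability.Probability"
begin

text \<open>Normalising constant of the s-dimensional Hausdorff measure (volume of the unit s-ball).\<close>
definition hausdorff_const :: "real \<Rightarrow> real" where
  "hausdorff_const s = pi powr (s / 2) / Gamma (s / 2 + 1)"

definition hausdorff_pre :: "real \<Rightarrow> real \<Rightarrow> 'a::metric_space set \<Rightarrow> ennreal" where
  "hausdorff_pre s \<delta> U =
     (INF C \<in> {C :: nat \<Rightarrow> 'a set. U \<subseteq> (\<Union>i. C i) \<and>
                 (\<forall>i. bounded (C i) \<and> diameter (C i) \<le> \<delta>)}.
        (\<Sum>i. (if C i = {} then 0
               else ennreal (hausdorff_const s * (diameter (C i) / 2) powr s))))"

definition hausdorff :: "real \<Rightarrow> 'a::metric_space set \<Rightarrow> ennreal" where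
  "hausdorff s U = (SUP \<delta> \<in> {0<..}. hausdorff_pre s \<delta> U)"

definition hausdorff_measurable :: "real \<Rightarrow> 'a::metric_space set \<Rightarrow> bool" where
  "hausdorff_measurable s U \<longleftrightarrow>
     (\<forall>T. hausdorff s T = hausdorff s (T \<inter> U) + hausdorff s (T - U))"

text \<open>s-rectifiable sets, with s = CARD('s) given by the index type of R^s.\<close>
definition rectifiable :: "'s::finite itself \<Rightarrow> 'a::metric_space set \<Rightarrow> bool" where
  "rectifiable _ U \<longleftrightarrow> U \<noteq> {} \<and>
     (\<exists>(A :: (real^'s) set) (\<phi> :: real^'s \<Rightarrow> 'a) L.
        compact A \<and> L-lipschitz_on A \<phi> \<and> U = \<phi> ` A)"

definition countably_rectifiable :: "'s::finite itself \<Rightarrow> 'a::metric_space set \<Rightarrow> bool" where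
  "countably_rectifiable S U \<longleftrightarrow>
     (\<exists>\<F>. countable \<F> \<and> (\<forall>F\<in>\<F>. rectifiable S F) \<and> U = \<Union>\<F>)"

definition countably_Hs_rectifiable :: "'s::finite itself \<Rightarrow> 'a::metric_space set \<Rightarrow> bool" where
  "countably_Hs_rectifiable S U \<longleftrightarrow>
     hausdorff_measurable (real CARD('s)) U \<and>
     (\<exists>V. countably_rectifiable S V \<and> hausdorff (real CARD('s)) (U - V) = 0)"

definition rectifiable_rv ::
  "'s::finite itself \<Rightarrow> 'o measure \<Rightarrow> ('o \<Rightarrow> 'a::{metric_space,topological_space}) \<Rightarrow> bool" where
  "rectifiable_rv S M X \<longleftrightarrow>
     (\<exists>U. countably_Hs_rectifiable S U \<and>
        (\<forall>B \<in> sets borel. hausdorff (real CARD('s)) (B \<inter> U) = 0 \<longrightarrow>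
            emeasure (distr M borel X) B = 0))"

end

theory Submission
  imports Defs
begin


lemma mvcont: "continuous_on S (\<lambda>p::(real^'m) \<times> ((real^'m^'n) \<times> (real^'n)). fst (snd p) *v fst p)"
  unfolding matrix_vector_mult_def
  by (intro continuous_intros)

lemma closed_fiber:
  fixes K :: "(real^'m) set"
  assumes "compact K"
  shows "closed {w :: (real^'m^'n) \<times> (real^'n). \<exists>v\<in>K. fst w *v v = snd w}"
proof -
  have "closed {w :: (real^'m^'n) \<times> (real^'n). \<exists>v. v \<in> K \<and> (v, w) \<in> {p. fst (snd p) *v fst p = snd (snd p)}}"
    apply (rule closed_compact_projection[OF assms])
    apply (rule closed_Collect_eq)
     apply (rule mvcont)
    apply (intro continuous_intros)
    done
  then show ?thesis by (simp add: Bex_def)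
qed

lemma decoder_exists:
  fixes C :: "nat \<Rightarrow> (real^'m) set"
  assumes cC: "\<And>i. compact (C i)"
  shows "\<exists>g :: (real^'m^'n) \<times> (real^'n) \<Rightarrow> real^'m. g \<in> borel_measurable borel \<and>
     (\<forall>A x. x \<in> (\<Union>i. C i) \<and> (\<forall>v \<in> (\<Union>i. C i). A *v v = A *v x \<longrightarrow> v = x) \<longrightarrow> g (A, A *v x) = x)"
proof -
  define P where "P i = {w :: (real^'m^'n) \<times> (real^'n). \<exists>v\<in>C i. fst w *v v = snd w}" for i
  define Q where "Q i j c = {w :: (real^'m^'n) \<times> (real^'n). \<exists>v\<in>C i \<inter> {v. v$j \<le> c}. fst w *v v = snd w}" for i j c
  define h where "h i j w = Inf ((\<lambda>v. v$j) ` {v\<in>C i. fst w *v v = snd w})" for i j and w :: "(real^'m^'n) \<times> (real^'n)"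
  define I where "I w = (LEAST i. w \<in> P i)" for w
  define g where "g w = (\<chi> j. h (I w) j w)" for w
  have Pc: "closed (P i)" for i unfolding P_def by (rule closed_fiber[OF cC])
  have Qc: "closed (Q i j c)" for i j c unfolding Q_def
    apply (rule closed_fiber)
    apply (rule compact_Int_closed[OF cC])
    apply (rule closed_Collect_le)
     apply (intro continuous_intros)+
    done
  have hmin: "\<exists>v\<in>C i. fst w *v v = snd w \<and> h i j w = v$j \<and> (\<forall>u\<in>C i. fst w *v u = snd w \<longrightarrow> v$j \<le> u$j)"
    if "w \<in> P i" for i j w
  proof -
    let ?F = "{v\<in>C i. fst w *v v = snd w}"
    have "?F = C i \<inter> {v. fst w *v v = snd w}" by auto
    moreover have "closed {v. fst w *v v = snd w}"
      by (rule closed_Collect_eq) (intro continuous_intros)+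
    ultimately have cF: "compact ?F" using compact_Int_closed[OF cC] by simp
    have ne: "?F \<noteq> {}" using that unfolding P_def by auto
    obtain v where v: "v \<in> ?F" "\<forall>u\<in>?F. v$j \<le> u$j"
    proof -
      have "continuous_on ?F (\<lambda>v. v$j)" by (intro continuous_intros)
      from continuous_attains_inf[OF cF ne this] show ?thesis using that by blast
    qed
    have "h i j w = v$j" unfolding h_def
      by (rule cInf_eq_minimum) (use v in auto)
    then show ?thesis using v by auto
  qed
  have hmeas: "(\<lambda>w. h i j w) \<in> borel_measurable borel" for i j
  proof (subst borel_measurable_iff_le, intro allI)
    fix c
    have "{w \<in> space borel. h i j w \<le> c} = (P i \<inter> Q i j c) \<union> (- P i \<inter> {w. Inf ((\<lambda>v::real^'m. v$j) ` {}) \<le> c})"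
    proof (intro set_eqI iffI)
      fix w assume w: "w \<in> {w \<in> space borel. h i j w \<le> c}"
      show "w \<in> (P i \<inter> Q i j c) \<union> (- P i \<inter> {w. Inf ((\<lambda>v::real^'m. v$j) ` {}) \<le> c})"
      proof (cases "w \<in> P i")
        case True
        then obtain v where "v\<in>C i" "fst w *v v = snd w" "h i j w = v$j" using hmin by blast
        then show ?thesis using w True unfolding Q_def by auto
      next
        case False
        then have e: "{v\<in>C i. fst w *v v = snd w} = {}" unfolding P_def by auto
        have "h i j w = Inf ((\<lambda>v::real^'m. v$j) ` {})" unfolding h_def e by (rule refl)
        then show ?thesis using w False by auto
      qed
    next
      fix w assume w: "w \<in> (P i \<inter> Q i j c) \<union> (- P i \<inter> {w. Inf ((\<lambda>v::real^'m. v$j) ` {}) \<le> c})"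
      show "w \<in> {w \<in> space borel. h i j w \<le> c}"
      proof (cases "w \<in> P i")
        case True
        then obtain v where v: "v\<in>C i" "fst w *v v = snd w" "h i j w = v$j"
            "\<forall>u\<in>C i. fst w *v u = snd w \<longrightarrow> v$j \<le> u$j" using hmin by blast
        from w True obtain u where "u \<in> C i" "u$j \<le> c" "fst w *v u = snd w" unfolding Q_def by auto
        then show ?thesis using v by force
      next
        case False
        then have e: "{v\<in>C i. fst w *v v = snd w} = {}" unfolding P_def by auto
        have "h i j w = Inf ((\<lambda>v::real^'m. v$j) ` {})" unfolding h_def e by (rule refl)
        then show ?thesis using w False by (auto split: if_splits)
      qed
    qed
    also have "\<dots> \<in> sets borel"
      by (intro sets.Un sets.Int borel_closed Pc Qc borel_comp) auto
    finally show "{w \<in> space borel. h i j w \<le> c} \<in> sets borel" .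
  qed
  have Pm: "(\<lambda>w. w \<in> P i) \<in> measurable borel (count_space UNIV)" for i
  proof -
    have "P i \<in> sets borel" using Pc borel_closed by auto
    then show ?thesis unfolding pred_def by simp
  qed
  have Im: "I \<in> measurable borel (count_space UNIV)"
    unfolding I_def by (rule measurable_Least[OF Pm])
  have gm: "g \<in> borel_measurable borel"
  proof (subst borel_measurable_euclidean_space, intro ballI)
    fix b :: "real^'m" assume "b \<in> Basis"
    then obtain j where b: "b = axis j 1" unfolding Basis_vec_def by auto
    have "(\<lambda>w. h (I w) j w) \<in> borel_measurable borel"
      by (rule measurable_compose_countable[OF hmeas Im])
    then show "(\<lambda>x. g x \<bullet> b) \<in> borel_measurable borel"
      by (simp add: b g_def inner_axis)
  qed
  show ?thesis
  proof (intro exI conjI allI impI)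
    fix A :: "real^'m^'n" and x assume H: "x \<in> (\<Union>i. C i) \<and> (\<forall>v \<in> (\<Union>i. C i). A *v v = A *v x \<longrightarrow> v = x)"
    then obtain i0 where "x \<in> C i0" by auto
    then have "(A, A *v x) \<in> P i0" unfolding P_def by auto
    then have IP: "(A, A *v x) \<in> P (I (A, A *v x))" unfolding I_def by (rule LeastI)
    show "g (A, A *v x) = x"
    proof (subst vec_eq_iff, intro allI)
      fix j
      obtain v where "v \<in> C (I (A, A *v x))" "A *v v = A *v x" "h (I (A, A *v x)) j (A, A *v x) = v$j"
        using hmin[OF IP, of j] by auto
      moreover then have "v = x" using H by auto
      ultimately show "g (A, A *v x) $ j = x $ j" by (simp add: g_def)
    qed
  qed (rule gm)
qed



lemma div_lip:
  fixes uY uZ wY wZ c Mw Mu Bu Bw d :: real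
  assumes "c > 0" "\<bar>wY\<bar> \<ge> c" "\<bar>wZ\<bar> \<ge> c" "\<bar>wZ\<bar> \<le> Mw" "\<bar>uZ\<bar> \<le> Mu"
    "\<bar>uY - uZ\<bar> \<le> Bu * d" "\<bar>wY - wZ\<bar> \<le> Bw * d"
  shows "\<bar>uY/wY - uZ/wZ\<bar> \<le> ((Bu*Mw + Mu*Bw)/c^2) * d"
proof -
  have wY0: "wY \<noteq> 0" and wZ0: "wZ \<noteq> 0" using assms by auto
  have e: "uY/wY - uZ/wZ = ((uY - uZ) * wZ + uZ * (wZ - wY)) / (wY * wZ)"
    using wY0 wZ0 by (simp add: field_simps)
  have n1: "\<bar>(uY - uZ) * wZ\<bar> \<le> Bu * d * Mw"
    unfolding abs_mult by (rule mult_mono) (use assms in auto)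
  have n2: "\<bar>uZ * (wZ - wY)\<bar> \<le> Mu * (Bw * d)"
    unfolding abs_mult by (rule mult_mono) (use assms in \<open>auto simp: abs_minus_commute\<close>)
  have num: "\<bar>(uY - uZ) * wZ + uZ * (wZ - wY)\<bar> \<le> (Bu*Mw + Mu*Bw) * d"
    using n1 n2 abs_triangle_ineq[of "(uY - uZ) * wZ" "uZ * (wZ - wY)"] by (simp add: algebra_simps)
  have den: "c^2 \<le> \<bar>wY * wZ\<bar>"
    unfolding abs_mult power2_eq_square by (rule mult_mono) (use assms in auto)
  have "\<bar>uY/wY - uZ/wZ\<bar> = \<bar>(uY - uZ) * wZ + uZ * (wZ - wY)\<bar> / \<bar>wY * wZ\<bar>"
    unfolding e by (simp add: abs_divide)
  also have "\<dots> \<le> ((Bu*Mw + Mu*Bw) * d) / c^2"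
    by (rule frac_le) (use num den assms in auto)
  finally show ?thesis by simp
qed

lemma vec_l1_bound:
  fixes g :: "'a \<Rightarrow> real^'i"
  assumes "\<And>i. \<bar>g Y $ i - g Z $ i\<bar> \<le> B"
  shows "norm (g Y - g Z) \<le> real CARD('i) * B"
proof -
  have "norm (g Y - g Z) \<le> (\<Sum>i\<in>UNIV. \<bar>(g Y - g Z) $ i\<bar>)" by (rule norm_le_l1_cart)
  also have "\<dots> \<le> (\<Sum>i\<in>(UNIV::'i set). B)" by (rule sum_mono) (use assms in auto)
  finally show ?thesis by simp
qed

lemma mat_l1_bound:
  fixes g :: "'a \<Rightarrow> real^'j^'i"
  assumes "\<And>i j. \<bar>g Y $ i $ j - g Z $ i $ j\<bar> \<le> B"
  shows "norm (g Y - g Z) \<le> real CARD('i) * (real CARD('j) * B)"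
proof -
  have "norm (g Y - g Z) \<le> (\<Sum>i\<in>UNIV. norm ((g Y - g Z) $ i))" unfolding norm_vec_def by (rule L2_set_le_sum) simp
  also have "\<dots> \<le> (\<Sum>i\<in>(UNIV::'i set). real CARD('j) * B)"
  proof (rule sum_mono)
    fix i
    show "norm ((g Y - g Z) $ i) \<le> real CARD('j) * B"
      using vec_l1_bound[of "\<lambda>Y. g Y $ i" Y Z B] assms by simp
  qed
  finally show ?thesis by simp
qed



lemma piece_negligible:
  fixes K :: "(real^'s) set" and \<phi> :: "real^'s \<Rightarrow> real^'m" and x :: "real^'m"
    and \<iota> :: "'s::finite \<Rightarrow> 'n::finite" and k :: "'m::finite" and q :: nat and r0 :: 'n
  assumes K: "compact K" and lip: "L-lipschitz_on K \<phi>" and r0: "r0 \<notin> range \<iota>"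
  defines "aZ \<equiv> \<lambda>Z::real^'m^'n. (\<chi> t. Z $ \<iota> t $ k) :: real^'s"
  defines "dZ \<equiv> \<lambda>Z. \<phi> (aZ Z) - x"
  defines "f \<equiv> \<lambda>Z::real^'m^'n. (\<chi> r l. if l = k then - ((Z$r - (Z$r$k) *\<^sub>R axis k 1) \<bullet> dZ Z) / (dZ Z $ k) else Z$r$l) :: real^'m^'n"
  shows "negligible (f ` {Z. aZ Z \<in> K \<and> \<bar>dZ Z $ k\<bar> \<ge> 1/(real q+1) \<and> Z$r0$k = 0 \<and> norm Z \<le> real q})"
proof -
  define S where "S = {Z. aZ Z \<in> K \<and> \<bar>dZ Z $ k\<bar> \<ge> 1/(real q+1) \<and> Z$r0$k = 0 \<and> norm Z \<le> real q}"
  define c where "c = 1/(real q+1)"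
  have c0: "c > 0" unfolding c_def by simp
  have L0: "L \<ge> 0" using lip lipschitz_on_nonneg by blast
  have "compact (\<phi> ` K)"
    using K lip by (intro compact_continuous_image lipschitz_on_continuous_on)
  then obtain Mp where Mp: "\<And>a. a \<in> K \<Longrightarrow> norm (\<phi> a) \<le> Mp"
  proof -
    have "bounded (\<phi> ` K)" using \<open>compact (\<phi> ` K)\<close> compact_imp_bounded by blast
    then obtain B where "\<forall>y\<in>\<phi> ` K. norm y \<le> B" unfolding bounded_iff by blast
    then show ?thesis using that by blast
  qed
  define Md where "Md = max 0 Mp + norm x"
  have dbound: "norm (dZ Z) \<le> Md" if "Z \<in> S" for Z
  proof -
    have "norm (dZ Z) \<le> norm (\<phi> (aZ Z)) + norm x" unfolding dZ_def by (rule norm_triangle_ineq4)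
    then show ?thesis using Mp[of "aZ Z"] that unfolding S_def Md_def by auto
  qed
  have Md0: "Md \<ge> 0" unfolding Md_def by simp
  have comp: "\<bar>W $ i $ j\<bar> \<le> norm W" for W :: "real^'m^'n" and i j
    using component_le_norm_cart[of "W$i" j] Finite_Cartesian_Product.norm_nth_le[where x=W and i=i] by linarith
  have aLip: "norm (aZ Y - aZ Z) \<le> real CARD('s) * norm (Y - Z)" for Y Z
  proof (rule vec_l1_bound)
    fix i
    show "\<bar>aZ Y $ i - aZ Z $ i\<bar> \<le> norm (Y - Z)"
      using comp[of "Y - Z" "\<iota> i" k] by (simp add: aZ_def)
  qed
  have dLip: "norm (dZ Y - dZ Z) \<le> L * real CARD('s) * norm (Y - Z)" if "Y \<in> S" "Z \<in> S" for Y Z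
  proof -
    have "norm (dZ Y - dZ Z) = dist (\<phi> (aZ Y)) (\<phi> (aZ Z))" unfolding dZ_def by (simp add: dist_norm)
    also have "\<dots> \<le> L * dist (aZ Y) (aZ Z)" using lip that unfolding S_def lipschitz_on_def by auto
    also have "\<dots> \<le> L * (real CARD('s) * norm (Y - Z))"
      using aLip[of Y Z] L0 by (simp add: dist_norm mult_left_mono)
    finally show ?thesis by simp
  qed
  define e where "e r Z = Z$r - (Z$r$k) *\<^sub>R axis k 1" for r and Z :: "real^'m^'n"
  have ebound: "norm (e r Z) \<le> 2 * real q" if "Z \<in> S" for r Z
  proof -
    have "norm (e r Z) \<le> norm (Z$r) + norm ((Z$r$k) *\<^sub>R (axis k 1 :: real^'m))" unfolding e_def by (rule norm_triangle_ineq4)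
    also have "\<dots> \<le> norm Z + norm Z" using Finite_Cartesian_Product.norm_nth_le[where x=Z and i=r] comp[of Z r k] by simp
    finally show ?thesis using that unfolding S_def by auto
  qed
  have eLip: "norm (e r Y - e r Z) \<le> 2 * norm (Y - Z)" for r Y Z
  proof -
    have "e r Y - e r Z = e r (Y - Z)" unfolding e_def by (simp add: algebra_simps)
    also have "norm (e r (Y - Z)) \<le> norm (Y - Z) + norm (Y - Z)"
    proof -
      have "norm (e r (Y - Z)) \<le> norm ((Y - Z)$r) + norm (((Y - Z)$r$k) *\<^sub>R (axis k 1 :: real^'m))" unfolding e_def by (rule norm_triangle_ineq4)
      then show ?thesis using Finite_Cartesian_Product.norm_nth_le[where x="Y - Z" and i=r] comp[of "Y - Z" r k] by simp
    qed
    finally show ?thesis by simp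
  qed
  define u where "u r Z = e r Z \<bullet> dZ Z" for r Z
  have ubound: "\<bar>u r Z\<bar> \<le> 2 * real q * Md" if "Z \<in> S" for r Z
  proof -
    have "\<bar>u r Z\<bar> \<le> norm (e r Z) * norm (dZ Z)" unfolding u_def by (rule Cauchy_Schwarz_ineq2)
    also have "\<dots> \<le> (2 * real q) * Md" by (rule mult_mono) (use ebound dbound that in auto)
    finally show ?thesis .
  qed
  have uLip: "\<bar>u r Y - u r Z\<bar> \<le> (2 * real q * (L * real CARD('s)) + 2 * Md) * norm (Y - Z)"
    if "Y \<in> S" "Z \<in> S" for r Y Z
  proof -
    have "u r Y - u r Z = e r Y \<bullet> (dZ Y - dZ Z) + (e r Y - e r Z) \<bullet> dZ Z"
      unfolding u_def by (simp add: algebra_simps inner_diff_left inner_diff_right)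
    then have "\<bar>u r Y - u r Z\<bar> \<le> \<bar>e r Y \<bullet> (dZ Y - dZ Z)\<bar> + \<bar>(e r Y - e r Z) \<bullet> dZ Z\<bar>" by simp
    also have "\<dots> \<le> norm (e r Y) * norm (dZ Y - dZ Z) + norm (e r Y - e r Z) * norm (dZ Z)"
      by (intro add_mono Cauchy_Schwarz_ineq2)
    also have "\<dots> \<le> (2 * real q) * (L * real CARD('s) * norm (Y - Z)) + (2 * norm (Y - Z)) * Md"
      by (intro add_mono mult_mono) (use ebound dLip eLip dbound that Md0 L0 in auto)
    finally show ?thesis by (simp add: algebra_simps)
  qed
  define Bu where "Bu = 2 * real q * (L * real CARD('s)) + 2 * Md"
  define Bw where "Bw = L * real CARD('s)"
  define Mu where "Mu = 2 * real q * Md"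
  define B where "B = max 1 ((Bu*Md + Mu*Bw)/c^2)"
  have fcomp: "\<bar>f Y $ r $ l - f Z $ r $ l\<bar> \<le> B * norm (Y - Z)" if "Y \<in> S" "Z \<in> S" for Y Z r l
  proof (cases "l = k")
    case True
    have wY: "\<bar>dZ Y $ k\<bar> \<ge> c" and wZ: "\<bar>dZ Z $ k\<bar> \<ge> c" using that unfolding S_def c_def by auto
    have "\<bar>dZ Z $ k\<bar> \<le> Md" using component_le_norm_cart[of "dZ Z" k] dbound[OF that(2)] by linarith
    moreover have "\<bar>dZ Y $ k - dZ Z $ k\<bar> \<le> Bw * norm (Y - Z)"
      using component_le_norm_cart[of "dZ Y - dZ Z" k] dLip[OF that] unfolding Bw_def by simp
    ultimately have "\<bar>u r Y / dZ Y $ k - u r Z / dZ Z $ k\<bar> \<le> ((Bu*Md + Mu*Bw)/c^2) * norm (Y - Z)"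
      using div_lip[OF c0 wY wZ _ ubound[OF that(2)] uLip[OF that]] unfolding Bu_def Mu_def by blast
    also have "\<dots> \<le> B * norm (Y - Z)" unfolding B_def by (intro mult_right_mono) auto
    finally show ?thesis using True unfolding f_def u_def e_def by (simp add: abs_minus_commute)
  next
    case False
    then have "\<bar>f Y $ r $ l - f Z $ r $ l\<bar> = \<bar>(Y - Z) $ r $ l\<bar>" unfolding f_def by simp
    also have "\<dots> \<le> norm (Y - Z)" by (rule comp)
    also have "\<dots> \<le> B * norm (Y - Z)" using mult_right_mono[of 1 B "norm (Y - Z)"] unfolding B_def by simp
    finally show ?thesis .
  qed
  have fLip: "norm (f Y - f Z) \<le> (real CARD('n) * real CARD('m) * B) * norm (Y - Z)" if "Y \<in> S" "Z \<in> S" for Y Z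
    using mat_l1_bound[of f Y Z "B * norm (Y - Z)"] fcomp[OF that] by (simp add: algebra_simps)
  have negS: "negligible S"
  proof (rule negligible_subset)
    show "negligible {Z :: real^'m^'n. (axis r0 (axis k 1)) \<bullet> Z = 0}"
      by (rule negligible_hyperplane) (simp add: axis_eq_0_iff)
    show "S \<subseteq> {Z :: real^'m^'n. (axis r0 (axis k 1)) \<bullet> Z = 0}"
      unfolding S_def by (auto simp: inner_axis' cart_eq_inner_axis[symmetric])
  qed
  have "negligible (f ` S)"
  proof (rule negligible_locally_Lipschitz_image[OF order_refl negS])
    fix Z assume "Z \<in> S"
    then show "\<exists>T B. open T \<and> Z \<in> T \<and> (\<forall>y\<in>S \<inter> T. norm (f y - f Z) \<le> B * norm (y - Z))"
      using fLip by (intro exI[of _ UNIV]) blast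
  qed
  then show ?thesis unfolding S_def .
qed



lemma bad_negligible:
  fixes K :: "(real^'s::finite) set" and \<phi> :: "real^'s \<Rightarrow> real^'m::finite" and x :: "real^'m"
  assumes K: "compact K" and lip: "L-lipschitz_on K \<phi>" and card: "CARD('s) < CARD('n::finite)"
  shows "negligible {A :: real^'m^'n. \<exists>a\<in>K. \<phi> a \<noteq> x \<and> A *v (\<phi> a - x) = 0}"
proof -
  obtain \<iota> :: "'s \<Rightarrow> 'n" where inj: "inj \<iota>"
    using card_le_inj[of "UNIV::'s set" "UNIV::'n set"] card by auto
  have "card (range \<iota>) = CARD('s)" using inj by (simp add: card_image)
  then have "range \<iota> \<noteq> UNIV" using card by auto
  then obtain r0 where r0: "r0 \<notin> range \<iota>" by auto
  define aZ where "aZ k = (\<lambda>Z::real^'m^'n. (\<chi> t. Z $ \<iota> t $ k) :: real^'s)" for k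
  define dZ where "dZ k = (\<lambda>Z. \<phi> (aZ k Z) - x)" for k
  define f where "f k = (\<lambda>Z::real^'m^'n. (\<chi> r l. if l = k then - ((Z$r - (Z$r$k) *\<^sub>R axis k 1) \<bullet> dZ k Z) / (dZ k Z $ k) else Z$r$l) :: real^'m^'n)" for k
  define S where "S k q = {Z. aZ k Z \<in> K \<and> \<bar>dZ k Z $ k\<bar> \<ge> 1/(real q+1) \<and> Z$r0$k = 0 \<and> norm Z \<le> real q}" for k and q :: nat
  have neg: "negligible (f k ` S k q)" for k q
    unfolding f_def dZ_def aZ_def S_def
    by (rule piece_negligible[OF K lip r0])
  have sub: "{A :: real^'m^'n. \<exists>a\<in>K. \<phi> a \<noteq> x \<and> A *v (\<phi> a - x) = 0} \<subseteq> (\<Union>k. \<Union>q. f k ` S k q)"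
  proof
    fix A :: "real^'m^'n" assume "A \<in> {A. \<exists>a\<in>K. \<phi> a \<noteq> x \<and> A *v (\<phi> a - x) = 0}"
    then obtain a where a: "a \<in> K" "\<phi> a \<noteq> x" "A *v (\<phi> a - x) = 0" by auto
    define d where "d = \<phi> a - x"
    obtain k where dk: "d $ k \<noteq> 0" using a(2) unfolding d_def by (metis vec_eq_iff zero_index right_minus_eq vector_minus_component)
    define Z :: "real^'m^'n" where "Z = (\<chi> r l. if l = k then (if r \<in> range \<iota> then a $ inv \<iota> r else 0) else A$r$l)"
    have aZZ: "aZ k Z = a" unfolding aZ_def Z_def by (simp add: vec_eq_iff inv_f_f[OF inj])
    have dZZ: "dZ k Z = d" unfolding dZ_def aZZ d_def ..
    have Zr0: "Z $ r0 $ k = 0" unfolding Z_def using r0 by simp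
    have rowZ: "Z$r - (Z$r$k) *\<^sub>R axis k 1 = A$r - (A$r$k) *\<^sub>R axis k 1" for r
      unfolding Z_def by (simp add: vec_eq_iff axis_def)
    have Ad: "A$r \<bullet> d = 0" for r
      using a(3) unfolding d_def matrix_mult_dot by (simp add: vec_eq_iff)
    have fZ: "f k Z = A"
    proof (subst vec_eq_iff, intro allI, subst vec_eq_iff, intro allI)
      fix r l
      show "f k Z $ r $ l = A $ r $ l"
      proof (cases "l = k")
        case True
        have "(A$r - (A$r$k) *\<^sub>R axis k 1) \<bullet> d = - (A$r$k * d$k)"
          using Ad[of r] by (simp add: inner_diff_left inner_axis')
        then show ?thesis using True dk unfolding f_def dZZ rowZ by simp
      next
        case False
        then show ?thesis unfolding f_def Z_def by simp
      qed
    qed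
    define q where "q = nat \<lceil>max (norm Z) (1/\<bar>d$k\<bar>)\<rceil>"
    have q1: "norm Z \<le> real q" unfolding q_def by linarith
    have q2: "1/\<bar>d$k\<bar> \<le> real q" unfolding q_def by linarith
    have "1/(real q + 1) \<le> \<bar>d$k\<bar>"
    proof -
      have "0 < \<bar>d$k\<bar>" using dk by simp
      then have "1 \<le> \<bar>d$k\<bar> * real q" using q2 by (simp add: field_simps)
      then show ?thesis by (simp add: field_simps)
    qed
    then have "Z \<in> S k q" unfolding S_def using aZZ dZZ Zr0 q1 a(1) by simp
    then show "A \<in> (\<Union>k. \<Union>q. f k ` S k q)" using fZ by (auto intro!: exI[of _ k] exI[of _ q] image_eqI[of _ _ Z])
  qed
  have "negligible (\<Union>k. \<Union>q. f k ` S k q)"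
  proof (rule negligible_Union)
    show "finite (range (\<lambda>k. \<Union>q. f k ` S k q))" by simp
    fix T assume "T \<in> range (\<lambda>k. \<Union>q. f k ` S k q)"
    then obtain k where T: "T = (\<Union>q. f k ` S k q)" by auto
    show "negligible T" unfolding T
      by (rule negligible_countable_Union) (use neg in auto)
  qed
  then show ?thesis using sub negligible_subset by blast
qed



lemma bad_negligible_set:
  fixes C :: "(real^'m::finite) set" and x :: "real^'m"
  assumes "C = {} \<or> rectifiable TYPE('s::finite) C" and card: "CARD('s) < CARD('n::finite)"
  shows "negligible {A :: real^'m^'n. \<exists>v\<in>C. v \<noteq> x \<and> A *v (v - x) = 0}"
proof (cases "C = {}")
  case True then show ?thesis by simp
next
  case False
  then obtain K :: "(real^'s) set" and \<phi> L where K: "compact K" "L-lipschitz_on K \<phi>" "C = \<phi> ` K"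
    using assms(1) unfolding rectifiable_def by blast
  have "{A :: real^'m^'n. \<exists>v\<in>C. v \<noteq> x \<and> A *v (v - x) = 0} = {A :: real^'m^'n. \<exists>a\<in>K. \<phi> a \<noteq> x \<and> A *v (\<phi> a - x) = 0}"
    using K(3) by auto
  then show ?thesis using bad_negligible[OF K(1,2) card] by simp
qed

theorem corollary2:
  fixes M :: "'o measure"
    and X :: "'o \<Rightarrow> real^'m"
  assumes "prob_space M"
    and "X \<in> borel_measurable M"
    and "rectifiable_rv TYPE('s::finite) M X"
    and "CARD('s) < CARD('n::finite)"
    and "CARD('n) \<le> CARD('m::finite)"
  shows "\<exists>g :: (real^'m^'n) \<times> (real^'n) \<Rightarrow> real^'m.
           g \<in> borel_measurable borel \<and>
           (AE A in lborel.
              measure M {\<omega> \<in> space M. g (A, A *v X \<omega>) \<noteq> X \<omega>} = 0)"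
proof -
  note Xm[measurable] = assms(2)
  obtain U where U1: "countably_Hs_rectifiable TYPE('s) U"
    and U: "\<forall>B \<in> sets borel. hausdorff (real CARD('s)) (B \<inter> U) = 0 \<longrightarrow>
            emeasure (distr M borel X) B = 0"
    using assms(3) unfolding rectifiable_rv_def by blast
  obtain V where V1: "countably_rectifiable TYPE('s) V"
    and UV: "hausdorff (real CARD('s)) (U - V) = 0"
    using U1 unfolding countably_Hs_rectifiable_def by blast
  obtain \<F> where F: "countable \<F>" "\<forall>F\<in>\<F>. rectifiable TYPE('s) F" "V = \<Union>\<F>"
    using V1 unfolding countably_rectifiable_def by blast
  define C where "C i = (if \<F> = {} then {} else from_nat_into \<F> i)" for i
  have CV: "(\<Union>i. C i) = V"
  proof (cases "\<F> = {}")
    case True then show ?thesis using F(3) unfolding C_def by simp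
  next
    case False then show ?thesis using F(1,3) range_from_nat_into[OF False F(1)] unfolding C_def by simp
  qed
  have Crect: "C i = {} \<or> rectifiable TYPE('s) (C i)" for i
    using F(2) from_nat_into[of \<F> i] unfolding C_def by auto
  have Ccomp: "compact (C i)" for i
  proof (cases "C i = {}")
    case False
    then obtain K :: "(real^'s) set" and \<phi> L where K: "compact K" "L-lipschitz_on K \<phi>" "C i = \<phi> ` K"
      using Crect[of i] unfolding rectifiable_def by blast
    then show ?thesis unfolding K(3) by (intro compact_continuous_image lipschitz_on_continuous_on)
  qed simp
  have Cm[measurable]: "C i \<in> sets borel" for i
    using Ccomp[of i] by (simp add: borel_closed compact_imp_closed)
  have "\<exists>g :: (real^'m^'n) \<times> (real^'n) \<Rightarrow> real^'m. g \<in> borel_measurable borel \<and>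
     (\<forall>A x. x \<in> (\<Union>i. C i) \<and> (\<forall>v \<in> (\<Union>i. C i). A *v v = A *v x \<longrightarrow> v = x) \<longrightarrow> g (A, A *v x) = x)"
    by (rule decoder_exists[OF Ccomp])
  then obtain g :: "(real^'m^'n) \<times> (real^'n) \<Rightarrow> real^'m" where gm[measurable]: "g \<in> borel_measurable borel"
    and gdec0: "\<forall>A x. x \<in> (\<Union>i. C i) \<and> (\<forall>v \<in> (\<Union>i. C i). A *v v = A *v x \<longrightarrow> v = x) \<longrightarrow> g (A, A *v x) = x"
    by (elim exE conjE)
  have gdec: "g (A, A *v x) = x" if "x \<in> (\<Union>i. C i)" "\<forall>v \<in> (\<Union>i. C i). A *v v = A *v x \<longrightarrow> v = x" for A x
    using gdec0 that by simp
  define D where "D = distr M borel X"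
  interpret D: prob_space D unfolding D_def by (rule prob_space.prob_space_distr[OF assms(1) Xm])
  have Vm: "V \<in> sets borel" unfolding CV[symmetric]
    by (rule sets.countable_UN) (use Cm in blast)
  have AEV: "AE y in D. y \<in> V"
  proof (rule AE_I')
    have "(- V) \<inter> U = U - V" by auto
    then have h0: "hausdorff (real CARD('s)) ((- V) \<inter> U) = 0" using UV by simp
    have Vc: "- V \<in> sets borel" using Vm by (rule borel_comp)
    have "emeasure (distr M borel X) (- V) = 0" using bspec[OF U Vc] h0 by blast
    then have "emeasure D (- V) = 0" unfolding D_def .
    moreover have "- V \<in> sets D" using Vc unfolding D_def by simp
    ultimately show "- V \<in> null_sets D" by (rule null_setsI)
    show "{x \<in> space D. \<not> x \<in> V} \<subseteq> - V" by auto
  qed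
  have cont: "(\<lambda>z :: (real^'m) \<times> (real^'m^'n). (snd z, snd z *v fst z)) \<in> borel_measurable borel"
    by (intro borel_measurable_continuous_onI) (unfold matrix_vector_mult_def, intro continuous_intros)
  have pm: "(\<lambda>z :: (real^'m) \<times> (real^'m^'n). g (snd z, snd z *v fst z)) \<in> borel_measurable borel"
    using measurable_comp[OF cont gm] by (simp add: comp_def)
  have AEx: "AE A in lborel. g (A, A *v y) = y" if "y \<in> V" for y
  proof (rule AE_I')
    define N where "N = {A :: real^'m^'n. g (A, A *v y) \<noteq> y}"
    have "N \<subseteq> (\<Union>i. {A :: real^'m^'n. \<exists>v\<in>C i. v \<noteq> y \<and> A *v (v - y) = 0})"
    proof
      fix A assume "A \<in> N"
      then have "\<not> (\<forall>v \<in> (\<Union>i. C i). A *v v = A *v y \<longrightarrow> v = y)"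
        using gdec[of y A] that CV unfolding N_def by auto
      then show "A \<in> (\<Union>i. {A :: real^'m^'n. \<exists>v\<in>C i. v \<noteq> y \<and> A *v (v - y) = 0})"
      proof -
        from \<open>\<not> (\<forall>v \<in> (\<Union>i. C i). A *v v = A *v y \<longrightarrow> v = y)\<close>
        obtain v i where "v \<in> C i" "A *v v = A *v y" "v \<noteq> y" by blast
        moreover then have "A *v (v - y) = 0" by (simp add: matrix_vector_mult_diff_distrib)
        ultimately show ?thesis by blast
      qed
    qed
    moreover have "negligible (\<Union>i. {A :: real^'m^'n. \<exists>v\<in>C i. v \<noteq> y \<and> A *v (v - y) = 0})"
    proof (rule negligible_countable_Union)
      show "countable (range (\<lambda>i. {A :: real^'m^'n. \<exists>v\<in>C i. v \<noteq> y \<and> A *v (v - y) = 0}))" by simp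
      fix T assume "T \<in> range (\<lambda>i. {A :: real^'m^'n. \<exists>v\<in>C i. v \<noteq> y \<and> A *v (v - y) = 0})"
      then obtain i where T: "T = {A :: real^'m^'n. \<exists>v\<in>C i. v \<noteq> y \<and> A *v (v - y) = 0}" by blast
      show "negligible T" unfolding T by (rule bad_negligible_set[OF Crect assms(4)])
    qed
    ultimately have "negligible N" using negligible_subset by blast
    then have "N \<in> null_sets lebesgue" by (simp add: negligible_iff_null_sets)
    moreover have "N \<in> sets lborel"
    proof -
      have "(\<lambda>A :: real^'m^'n. (A, A *v y)) \<in> borel_measurable borel"
        by (intro borel_measurable_continuous_onI) (unfold matrix_vector_mult_def, intro continuous_intros)
      from measurable_comp[OF this gm] have "(\<lambda>A :: real^'m^'n. g (A, A *v y)) \<in> borel_measurable borel"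
        by (simp add: comp_def)
      from measurable_sets[OF this, of "- {y}"]
      have "(\<lambda>A :: real^'m^'n. g (A, A *v y)) -` (- {y}) \<inter> space borel \<in> sets borel"
        by (simp add: borel_comp borel_closed)
      moreover have "(\<lambda>A :: real^'m^'n. g (A, A *v y)) -` (- {y}) \<inter> space borel = N"
        unfolding N_def by auto
      ultimately show ?thesis by simp
    qed
    ultimately show "N \<in> null_sets lborel" using null_sets_completion_iff by blast
    show "{A \<in> space lborel. \<not> g (A, A *v y) = y} \<subseteq> N" unfolding N_def by auto
  qed
  have AE1: "AE y in D. AE A in lborel. g (A, A *v y) = y"
    using AEV by eventually_elim (rule AEx)
  interpret P: pair_sigma_finite D "lborel :: (real^'m^'n) measure" ..
  have "{z \<in> space (D \<Otimes>\<^sub>M lborel). g (snd z, snd z *v fst z) = fst z} \<in> sets (D \<Otimes>\<^sub>M (lborel :: (real^'m^'n) measure))"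
  proof -
    have s: "sets (D \<Otimes>\<^sub>M (lborel :: (real^'m^'n) measure)) = sets (borel \<Otimes>\<^sub>M borel)"
      by (intro sets_pair_measure_cong) (auto simp: D_def)
    have "{z \<in> space (borel :: ((real^'m) \<times> (real^'m^'n)) measure). g (snd z, snd z *v fst z) = fst z} \<in> sets borel"
    proof -
      have "(\<lambda>z :: (real^'m) \<times> (real^'m^'n). fst z) \<in> borel_measurable borel"
        by (rule borel_measurable_continuous_onI) (intro continuous_intros)
      from measurable_equality_set[OF pm this] show ?thesis by simp
    qed
    then show ?thesis unfolding s borel_prod by (simp add: D_def space_pair_measure)
  qed
  then have AE2: "AE A in lborel. AE y in D. g (A, A *v y) = y"
    using P.AE_commute[of "\<lambda>y A. g (A, A *v y) = y"] AE1 by simp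
  show ?thesis
  proof (intro exI conjI)
    show "g \<in> borel_measurable borel" by (rule gm)
    show "AE A in lborel. measure M {\<omega> \<in> space M. g (A, A *v X \<omega>) \<noteq> X \<omega>} = 0"
      using AE2
    proof eventually_elim
      fix A :: "real^'m^'n" assume "AE y in D. g (A, A *v y) = y"
      have "(\<lambda>y :: real^'m. (A, A *v y)) \<in> borel_measurable borel"
        by (intro borel_measurable_continuous_onI) (unfold matrix_vector_mult_def, intro continuous_intros)
      from measurable_comp[OF this gm] have gA[measurable]: "(\<lambda>y :: real^'m. g (A, A *v y)) \<in> borel_measurable borel"
        by (simp add: comp_def)
      have "AE \<omega> in M. g (A, A *v X \<omega>) = X \<omega>"
      proof -
        have "{y \<in> space borel. g (A, A *v y) = y} \<in> sets borel"
          using measurable_equality_set[OF gA measurable_ident] by simp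
        then show ?thesis
          using \<open>AE y in D. g (A, A *v y) = y\<close> AE_distr_iff[OF Xm, of "\<lambda>y. g (A, A *v y) = y"] unfolding D_def by simp
      qed
      moreover have "{\<omega> \<in> space M. g (A, A *v X \<omega>) \<noteq> X \<omega>} \<in> sets M"
        using measurable_equality_set[OF measurable_comp[OF Xm gA] Xm] by (simp add: comp_def)
      ultimately have "emeasure M {\<omega> \<in> space M. g (A, A *v X \<omega>) \<noteq> X \<omega>} = 0"
        using AE_iff_measurable[of "{\<omega> \<in> space M. g (A, A *v X \<omega>) \<noteq> X \<omega>}" M "\<lambda>\<omega>. g (A, A *v X \<omega>) = X \<omega>"]
        by simp
      then show "measure M {\<omega> \<in> space M. g (A, A *v X \<omega>) \<noteq> X \<omega>} = 0"
        by (simp add: measure_def)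
    qed
  qed
qed

end
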